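(* Let $G$ be a classical graph with vertex set $[n]=\{1,\dots,n\}$, let $\mathcal{S}_G=\operatorname{span}\{|e_i\rangle\langle e_j| : i=j \text{ or } i\text{ adjacent to } j\}\subseteq M_n$ be its associated quantum graph, and let $k\in\mathbb{N}$. Then $G$ is $k$-connected if and only if $\mathcal{S}_G$ is $k$-connected.
   Context: $(|e_k\rangle)$ is the standard basis of $\mathbb{C}^n$. A quantum graph on $M_n$ is a linear subspace $\mathcal{S}\subseteq M_n$ closed under adjoints and containing $I_n$. A quantum graph $\mathcal{T}\subseteq M_N$ is connected if $\mathcal{T}^m=M_N$ for some $m\in\mathbb{N}$ (powers are spans of products); otherwise disconnected. For a projection $P\in M_n$ ($P=P^2=P^\dagger$), $(I_n-P)\mathcal{S}(I_n-P)$ is regarded as a quantum graph in $(I_n-P)M_n(I_n-P)\cong M_{n-\operatorname{rank}(P)}$. A projection $P$ is a separator of $\mathcal{S}$ if $(I_n-P)\mathcal{S}(I_n-P)$ is either disconnected (as a subspace of $M_{n-\operatorname{rank}(P)}$) or $1$-dimensional. $\mathcal{S}$ is $k$-connected if every separator of $\mathcal{S}$ has rank at least $k$. Classically, $G$ is $k$-connected if every set of vertices whose removal leaves a disconnected graph or a single vertex has at least $k$ elements. *)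

theory Defs
  imports "HOL-Analysis.Analysis"
begin

type_synonym 'n cmat = "complex^'n^'n"

definition csmult :: "complex \<Rightarrow> ('n::finite) cmat \<Rightarrow> 'n cmat" where
  "csmult c A = (\<chi> i j. c * A$i$j)"

definition adj :: "('n::finite) cmat \<Rightarrow> 'n cmat" where
  "adj A = (\<chi> i j. cnj (A$j$i))"

definition cspan :: "('n::finite) cmat set \<Rightarrow> 'n cmat set" where
  "cspan X = {\<Sum>x\<in>F. csmult (c x) x | F c. finite F \<and> F \<subseteq> X}"

definition csubspace :: "('n::finite) cmat set \<Rightarrow> bool" where
  "csubspace S \<longleftrightarrow> 0 \<in> S \<and> (\<forall>A\<in>S. \<forall>B\<in>S. A + B \<in> S) \<and> (\<forall>c. \<forall>A\<in>S. csmult c A \<in> S)"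

definition quantum_graph :: "('n::finite) cmat set \<Rightarrow> bool" where
  "quantum_graph S \<longleftrightarrow> csubspace S \<and> (\<forall>A\<in>S. adj A \<in> S) \<and> mat 1 \<in> S"

definition matunit :: "'n::finite \<Rightarrow> 'n \<Rightarrow> 'n cmat" where
  "matunit i j = (\<chi> a b. if a = i \<and> b = j then 1 else 0)"

definition SG :: "('n::finite \<Rightarrow> 'n \<Rightarrow> bool) \<Rightarrow> 'n cmat set" where
  "SG E = cspan {matunit i j | i j. i = j \<or> E i j}"

definition prods :: "('n::finite) cmat set \<Rightarrow> nat \<Rightarrow> 'n cmat set" where
  "prods T m = {foldr (**) As (mat 1) | As. length As = m \<and> set As \<subseteq> T}"

definition qpow :: "('n::finite) cmat set \<Rightarrow> nat \<Rightarrow> 'n cmat set" where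
  "qpow T m = cspan (prods T m)"

definition projection :: "('n::finite) cmat \<Rightarrow> bool" where
  "projection P \<longleftrightarrow> P ** P = P \<and> adj P = P"

text \<open>Compression (I-P) S (I-P) and the corner algebra (I-P) M_n (I-P)
  (identified with M_{n - rank P}).\<close>
definition compress :: "('n::finite) cmat \<Rightarrow> 'n cmat set \<Rightarrow> 'n cmat set" where
  "compress P S = (\<lambda>A. (mat 1 - P) ** A ** (mat 1 - P)) ` S"

definition corner :: "('n::finite) cmat \<Rightarrow> 'n cmat set" where
  "corner P = compress P UNIV"

definition compressed_connected :: "('n::finite) cmat \<Rightarrow> 'n cmat set \<Rightarrow> bool" where
  "compressed_connected P S \<longleftrightarrow> (\<exists>m\<ge>1. qpow (compress P S) m = corner P)"

definition one_dimensional :: "('n::finite) cmat set \<Rightarrow> bool" where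
  "one_dimensional T \<longleftrightarrow> (\<exists>B. B \<noteq> 0 \<and> T = cspan {B})"

definition separator :: "('n::finite) cmat set \<Rightarrow> 'n cmat \<Rightarrow> bool" where
  "separator S P \<longleftrightarrow> projection P \<and>
     (\<not> compressed_connected P S \<or> one_dimensional (compress P S))"

definition qk_connected :: "nat \<Rightarrow> ('n::finite) cmat set \<Rightarrow> bool" where
  "qk_connected k S \<longleftrightarrow> (\<forall>P. separator S P \<longrightarrow> rank P \<ge> k)"

definition simple_graph :: "('n::finite \<Rightarrow> 'n \<Rightarrow> bool) \<Rightarrow> bool" where
  "simple_graph E \<longleftrightarrow> (\<forall>u v. E u v \<longrightarrow> E v u) \<and> (\<forall>u. \<not> E u u)"

definition removal_disconnected :: "('n::finite \<Rightarrow> 'n \<Rightarrow> bool) \<Rightarrow> 'n set \<Rightarrow> bool" where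
  "removal_disconnected E X \<longleftrightarrow>
     (\<exists>u v. u \<notin> X \<and> v \<notin> X \<and> \<not> (\<lambda>a b. a \<notin> X \<and> b \<notin> X \<and> E a b)\<^sup>*\<^sup>* u v)"

definition classical_separator :: "('n::finite \<Rightarrow> 'n \<Rightarrow> bool) \<Rightarrow> 'n set \<Rightarrow> bool" where
  "classical_separator E X \<longleftrightarrow> removal_disconnected E X \<or> card (UNIV - X) = 1"

definition ck_connected :: "nat \<Rightarrow> ('n::finite \<Rightarrow> 'n \<Rightarrow> bool) \<Rightarrow> bool" where
  "ck_connected k E \<longleftrightarrow> (\<forall>X. classical_separator E X \<longrightarrow> card X \<ge> k)"

end

theory Submission
  imports Defs
begin


lemma csmult_apply[simp]: "csmult c A $ i $ j = c * A $ i $ j"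
  by (simp add: csmult_def)
lemma adj_apply[simp]: "adj A $ i $ j = cnj (A $ j $ i)"
  by (simp add: adj_def)
lemma matunit_apply[simp]: "matunit i j $ a $ b = (if a = i \<and> b = j then 1 else 0)"
  by (simp add: matunit_def)

lemma csmult_zero_left[simp]: "csmult 0 A = 0"
  by (simp add: vec_eq_iff)
lemma csmult_zero_right[simp]: "csmult c 0 = 0"
  by (simp add: vec_eq_iff)
lemma csmult_one[simp]: "csmult 1 A = A"
  by (simp add: vec_eq_iff)
lemma csmult_csmult[simp]: "csmult a (csmult b A) = csmult (a*b) A"
  by (simp add: vec_eq_iff)
lemma csmult_add_left: "csmult (a+b) A = csmult a A + csmult b A"
  by (simp add: vec_eq_iff algebra_simps)
lemma csmult_add_right: "csmult c (A + B) = csmult c A + csmult c B"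
  by (simp add: vec_eq_iff algebra_simps)
lemma csmult_sum: "csmult c (sum f F) = (\<Sum>x\<in>F. csmult c (f x))"
  by (simp add: vec_eq_iff sum_distrib_left)
lemma csmult_mult_left: "csmult c A ** B = csmult c (A ** B)"
  by (simp add: vec_eq_iff matrix_matrix_mult_def sum_distrib_left mult.assoc)
lemma csmult_mult_right: "A ** csmult c B = csmult c (A ** B)"
  by (simp add: vec_eq_iff matrix_matrix_mult_def sum_distrib_left mult.left_commute)

lemma csubspace_sum:
  assumes "csubspace S" "\<And>x. x \<in> F \<Longrightarrow> f x \<in> S"
  shows "sum f F \<in> S"
proof (cases "finite F")
  case True
  then show ?thesis using assms(2)
    by (induction F rule: finite_induct) (use assms(1) in \<open>auto simp: csubspace_def\<close>)
next
  case False
  then show ?thesis using assms(1) by (simp add: csubspace_def)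
qed

lemma cspan_sub:
  assumes "csubspace S" "X \<subseteq> S"
  shows "cspan X \<subseteq> S"
proof
  fix A assume "A \<in> cspan X"
  then obtain F c where A: "A = (\<Sum>x\<in>F. csmult (c x) x)" "F \<subseteq> X"
    unfolding cspan_def by blast
  show "A \<in> S" unfolding A(1)
    by (rule csubspace_sum[OF assms(1)]) (use assms A(2) in \<open>auto simp: csubspace_def\<close>)
qed

lemma cspan_inc: "x \<in> X \<Longrightarrow> csmult c x \<in> cspan X"
  unfolding cspan_def
  by (rule CollectI, rule exI[of _ "{x}"], rule exI[of _ "\<lambda>_. c"]) auto

lemma cspan_inc1: "x \<in> X \<Longrightarrow> x \<in> cspan X"
  using cspan_inc[of x X 1] by simp

lemma csubspace_cspan: "csubspace (cspan X)"
  unfolding csubspace_def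
proof (intro conjI ballI allI)
  show "0 \<in> cspan X" unfolding cspan_def
    by (rule CollectI, rule exI[of _ "{}"]) auto
next
  fix A B assume "A \<in> cspan X" "B \<in> cspan X"
  then obtain F1 c1 F2 c2 where A: "A = (\<Sum>x\<in>F1. csmult (c1 x) x)" "finite F1" "F1 \<subseteq> X"
    and B: "B = (\<Sum>x\<in>F2. csmult (c2 x) x)" "finite F2" "F2 \<subseteq> X"
    unfolding cspan_def by blast
  define c where "c x = (if x \<in> F1 then c1 x else 0) + (if x \<in> F2 then c2 x else 0)" for x
  have "(\<Sum>x\<in>F1 \<union> F2. csmult (c x) x) =
     (\<Sum>x\<in>F1 \<union> F2. (if x \<in> F1 then csmult (c1 x) x else 0)) + (\<Sum>x\<in>F1 \<union> F2. (if x \<in> F2 then csmult (c2 x) x else 0))"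
    unfolding c_def csmult_add_left sum.distrib[symmetric] by (rule sum.cong) auto
  also have "\<dots> = A + B"
    unfolding A B sum.If_cases[OF finite_UnI[OF A(2) B(2)]] using A(2) B(2)
    by (simp add: Int_absorb1 Int_absorb2 sup.commute inf.commute)
  finally have eq: "(\<Sum>x\<in>F1 \<union> F2. csmult (c x) x) = A + B" .
  show "A + B \<in> cspan X" unfolding cspan_def
    by (rule CollectI, rule exI[of _ "F1 \<union> F2"], rule exI[of _ c]) (use eq A B in auto)
next
  fix d A assume "A \<in> cspan X"
  then obtain F c where A: "A = (\<Sum>x\<in>F. csmult (c x) x)" "finite F" "F \<subseteq> X"
    unfolding cspan_def by blast
  have eq: "csmult d A = (\<Sum>x\<in>F. csmult (d * c x) x)" unfolding A csmult_sum by simp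
  show "csmult d A \<in> cspan X" unfolding cspan_def
    by (rule CollectI, rule exI[of _ F], rule exI[of _ "\<lambda>x. d * c x"]) (use eq A in auto)
qed

lemma cspan_single: "cspan {B} = range (\<lambda>c. csmult c B)"
proof
  show "cspan {B} \<subseteq> range (\<lambda>c. csmult c B)"
    by (rule cspan_sub) (auto simp: csubspace_def image_iff csmult_add_left[symmetric]
        intro: exI[of _ 0] exI[of _ 1])
  show "range (\<lambda>c. csmult c B) \<subseteq> cspan {B}" using cspan_inc by blast
qed

lemma prods_closed:
  assumes "\<And>A B. A \<in> S \<Longrightarrow> B \<in> S \<Longrightarrow> A ** B \<in> S" "mat 1 \<in> S" "set As \<subseteq> S"
  shows "foldr (**) As (mat 1) \<in> S"
  using assms(3) by (induction As) (auto intro: assms(1,2))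



definition diagp :: "('n::finite \<Rightarrow> bool) \<Rightarrow> 'n cmat" where
  "diagp p = (\<chi> i j. if i = j \<and> p i then 1 else 0)"

lemma diagp_apply[simp]: "diagp p $ i $ j = (if i = j \<and> p i then 1 else 0)"
  by (simp add: diagp_def)

lemma diagp_left: "(diagp p ** A) $ a $ b = (if p a then A $ a $ b else 0)"
proof -
  have "(diagp p ** A) $ a $ b = (\<Sum>k\<in>UNIV. if k = a then (if p a then A $ a $ b else 0) else 0)"
    unfolding matrix_matrix_mult_def by (simp only: vec_lambda_beta, rule sum.cong) auto
  then show ?thesis by (simp add: sum.delta)
qed

lemma diagp_right: "(A ** diagp p) $ a $ b = (if p b then A $ a $ b else 0)"
proof -
  have "(A ** diagp p) $ a $ b = (\<Sum>k\<in>UNIV. if k = b then (if p b then A $ a $ b else 0) else 0)"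
    unfolding matrix_matrix_mult_def by (simp only: vec_lambda_beta, rule sum.cong) auto
  then show ?thesis by (simp add: sum.delta)
qed

lemma diagp_mult: "diagp p ** diagp q = diagp (\<lambda>i. p i \<and> q i)"
  by (auto simp: vec_eq_iff diagp_left)

lemma diagp_proj: "projection (diagp p)"
  unfolding projection_def by (simp add: diagp_mult vec_eq_iff)

lemma diagp_compl: "mat 1 - diagp p = diagp (\<lambda>i. \<not> p i)"
  by (simp add: vec_eq_iff mat_def)

lemma diagp_sandwich: "(diagp p ** A ** diagp p) $ a $ b = (if p a \<and> p b then A $ a $ b else 0)"
  by (simp add: diagp_left diagp_right)

lemma row_diagp: "row i (diagp p) = (if p i then axis i 1 else 0)"
  by (auto simp: row_def vec_eq_iff axis_def)

lemma rank_diagp: "rank (diagp p) = card {i. p i}"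
proof -
  let ?B = "(\<lambda>i. axis i (1::complex)) ` {i. p i}"
  have rows: "rows (diagp p) \<subseteq> insert 0 ?B" "?B \<subseteq> rows (diagp p)"
    by (auto simp: rows_def row_diagp)
  have ind: "vec.independent ?B"
    by (rule vec.independent_mono[OF independent_cart_basis]) (auto simp: cart_basis_def)
  have "vec.dim (rows (diagp p)) \<le> vec.dim (insert 0 ?B)"
    by (rule vec.dim_subset[OF rows(1)])
  also have "\<dots> = vec.dim ?B" by (simp add: vec.dim_insert vec.span_zero)
  finally have 1: "vec.dim (rows (diagp p)) \<le> vec.dim ?B" .
  have 2: "vec.dim ?B \<le> vec.dim (rows (diagp p))" by (rule vec.dim_subset[OF rows(2)])
  have "vec.dim ?B = card ?B" by (rule vec.dim_eq_card_independent[OF ind])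
  also have "\<dots> = card {i. p i}"
    by (rule card_image) (auto simp: inj_on_def axis_eq_axis)
  finally show ?thesis using 1 2 unfolding row_rank_def_gen by linarith
qed

lemma SG_entry:
  assumes "A \<in> SG E" "A $ a $ b \<noteq> 0" shows "a = b \<or> E a b"
proof -
  have "SG E \<subseteq> {A. \<forall>a b. A $ a $ b \<noteq> 0 \<longrightarrow> a = b \<or> E a b}"
    unfolding SG_def
  proof (rule cspan_sub)
    show "csubspace {A. \<forall>a b. A $ a $ b \<noteq> 0 \<longrightarrow> a = b \<or> E a b}"
      unfolding csubspace_def by (auto, metis add.right_neutral add_0)
  qed (auto split: if_splits)
  then show ?thesis using assms by blast
qed

lemma matunit_SG: "i = j \<or> E i j \<Longrightarrow> matunit i j \<in> SG E"
  unfolding SG_def by (rule cspan_inc1) blast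

lemma easy_dir:
  assumes sg: "simple_graph E" and qk: "qk_connected k (SG E)" and sep: "classical_separator E X"
  shows "k \<le> card X"
proof -
  define P where "P = diagp (\<lambda>i. i \<in> X)"
  define Q where "Q = diagp (\<lambda>i. i \<notin> X)"
  have Q: "mat 1 - P = Q" unfolding P_def Q_def diagp_compl ..
  have QAQ: "(Q ** A ** Q) $ a $ b = (if a \<notin> X \<and> b \<notin> X then A $ a $ b else 0)" for A a b
    unfolding Q_def diagp_sandwich ..
  have comp: "compress P S = (\<lambda>A. Q ** A ** Q) ` S" for S unfolding compress_def Q ..
  have rk: "rank P = card X" unfolding P_def rank_diagp by simp
  have "separator (SG E) P"
    using sep unfolding classical_separator_def
  proof
    assume "removal_disconnected E X"
    then obtain u v where uv: "u \<notin> X" "v \<notin> X" and nc: "\<not> (\<lambda>a b. a \<notin> X \<and> b \<notin> X \<and> E a b)\<^sup>*\<^sup>* u v"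
      unfolding removal_disconnected_def by blast
    define R where "R = (\<lambda>a b. a \<notin> X \<and> b \<notin> X \<and> E a b)"
    define C where "C = {w. R\<^sup>*\<^sup>* u w}"
    define blk where "blk = {A::'a cmat. \<forall>a b. (a \<in> C) \<noteq> (b \<in> C) \<longrightarrow> A $ a $ b = 0}"
    have uC: "u \<in> C" unfolding C_def by simp
    have vC: "v \<notin> C" using nc unfolding C_def R_def by simp
    have sub: "csubspace blk" unfolding blk_def csubspace_def by auto
    have mul: "A ** B \<in> blk" if "A \<in> blk" "B \<in> blk" for A B
      using that unfolding blk_def matrix_matrix_mult_def
      by (auto intro!: sum.neutral) (metis mult_zero_left mult_zero_right)+
    have one: "mat 1 \<in> blk" unfolding blk_def by (auto simp: mat_def)
    have T: "compress P (SG E) \<subseteq> blk"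
    proof
      fix Y assume "Y \<in> compress P (SG E)"
      then obtain A where A: "A \<in> SG E" "Y = Q ** A ** Q" unfolding comp by blast
      show "Y \<in> blk" unfolding blk_def
      proof (intro CollectI allI impI)
        fix a b assume ab: "(a \<in> C) \<noteq> (b \<in> C)"
        show "Y $ a $ b = 0"
        proof (rule ccontr)
          assume ne: "Y $ a $ b \<noteq> 0"
          then have X: "a \<notin> X" "b \<notin> X" and ne2: "A $ a $ b \<noteq> 0" unfolding A(2) QAQ by (auto split: if_splits)
          from SG_entry[OF A(1) ne2] ab have "E a b" by auto
          then have "R a b" "R b a" using X sg unfolding R_def simple_graph_def by auto
          then show False using ab unfolding C_def
            by (auto intro: rtranclp.rtrancl_into_rtrancl)
        qed
      qed
    qed
    have "\<not> compressed_connected P (SG E)"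
    proof
      assume "compressed_connected P (SG E)"
      then obtain m where m: "qpow (compress P (SG E)) m = corner P"
        unfolding compressed_connected_def by blast
      have "matunit u v \<in> corner P"
        unfolding corner_def comp
        by (rule image_eqI[of _ _ "matunit u v"]) (auto simp: vec_eq_iff QAQ uv)
      moreover have "qpow (compress P (SG E)) m \<subseteq> blk"
        unfolding qpow_def prods_def
        by (rule cspan_sub[OF sub]) (auto intro!: prods_closed mul one dest: subsetD[OF T])
      ultimately have "matunit u v \<in> blk" using m by blast
      then show False using uC vC unfolding blk_def by force
    qed
    then show ?thesis unfolding separator_def P_def by (simp add: diagp_proj)
  next
    assume "card (UNIV - X) = 1"
    then obtain u where u: "UNIV - X = {u}" by (metis card_1_singletonE)
    have "compress P (SG E) = cspan {matunit u u}"
    proof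
      show "compress P (SG E) \<subseteq> cspan {matunit u u}"
      proof
        fix Y assume "Y \<in> compress P (SG E)"
        then obtain A where A: "Y = Q ** A ** Q" unfolding comp by blast
        have "Y = csmult (A $ u $ u) (matunit u u)"
          using u unfolding A by (auto simp: vec_eq_iff QAQ)
        then show "Y \<in> cspan {matunit u u}" by (simp add: cspan_inc)
      qed
      show "cspan {matunit u u} \<subseteq> compress P (SG E)"
      proof
        fix Y assume "Y \<in> cspan {matunit u u}"
        then obtain c where c: "Y = csmult c (matunit u u)" unfolding cspan_single by blast
        have "Y \<in> SG E" unfolding c SG_def by (rule cspan_inc) blast
        moreover have "Y = Q ** Y ** Q" using u unfolding c by (auto simp: vec_eq_iff QAQ)
        ultimately show "Y \<in> compress P (SG E)" unfolding comp by blast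
      qed
    qed
    moreover have "matunit u u \<noteq> 0" by (auto simp: vec_eq_iff)
    ultimately have "one_dimensional (compress P (SG E))" unfolding one_dimensional_def by blast
    then show ?thesis unfolding separator_def P_def by (simp add: diagp_proj)
  qed
  then show ?thesis using qk rk unfolding qk_connected_def by auto
qed



lemma mult_matunit_right: "(A ** matunit i j) $ a $ b = (if b = j then A $ a $ i else 0)"
proof -
  have "(A ** matunit i j) $ a $ b = (\<Sum>k\<in>UNIV. if k = i then (if b = j then A $ a $ i else 0) else 0)"
    unfolding matrix_matrix_mult_def by (simp only: vec_lambda_beta, rule sum.cong) auto
  then show ?thesis by (simp add: sum.delta)
qed

lemma mult_matunit_left: "(matunit i j ** A) $ a $ b = (if a = i then A $ j $ b else 0)"
proof -
  have "(matunit i j ** A) $ a $ b = (\<Sum>k\<in>UNIV. if k = j then (if a = i then A $ j $ b else 0) else 0)"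
    unfolding matrix_matrix_mult_def by (simp only: vec_lambda_beta, rule sum.cong) auto
  then show ?thesis by (simp add: sum.delta)
qed

lemma sandwich_matunit: "(Q ** matunit i j ** Q) $ a $ b = Q $ a $ i * Q $ j $ b"
proof -
  have "(Q ** matunit i j ** Q) $ a $ b = (\<Sum>k\<in>UNIV. if k = j then Q $ a $ i * Q $ j $ b else 0)"
    unfolding matrix_matrix_mult_def[of "Q ** matunit i j"]
    by (simp only: vec_lambda_beta mult_matunit_right, rule sum.cong) auto
  then show ?thesis by (simp add: sum.delta)
qed

lemma matrix_sub_ldistrib': "(A::'n::finite cmat) ** (B - C) = A ** B - A ** C"
  by (simp add: vec_eq_iff matrix_matrix_mult_def sum_subtractf algebra_simps)
lemma matrix_sub_rdistrib': "((A::'n::finite cmat) - B) ** C = A ** C - B ** C"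
  by (simp add: vec_eq_iff matrix_matrix_mult_def sum_subtractf algebra_simps)
lemma matrix_add_rdistrib': "((A::'n::finite cmat) + B) ** C = A ** C + B ** C"
  by (simp add: vec_eq_iff matrix_matrix_mult_def sum.distrib algebra_simps)

lemma sum_cnj_sq_zero:
  fixes f :: "'a \<Rightarrow> complex"
  assumes "finite S" "(\<Sum>a\<in>S. cnj (f a) * f a) = 0" "x \<in> S"
  shows "f x = 0"
proof -
  have "(\<Sum>a\<in>S. cnj (f a) * f a) = of_real (\<Sum>a\<in>S. (cmod (f a))^2)"
    unfolding of_real_sum by (rule sum.cong[OF refl]) (metis complex_norm_square mult.commute of_real_power)
  then have "(\<Sum>a\<in>S. (cmod (f a))^2) = 0" using assms(2) by (metis of_real_eq_0_iff)
  then have "(cmod (f x))^2 = 0"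
    using sum_nonneg_eq_0_iff[of S "\<lambda>a. (cmod (f a))^2"] assms(1,3) by auto
  then show ?thesis by simp
qed

lemma prods_cons: "Y \<in> prods T n \<Longrightarrow> X \<in> T \<Longrightarrow> X ** Y \<in> prods T (Suc n)"
  unfolding prods_def
  by (auto, rule exI[of _ "X # _"]) auto

lemma prods_one: "X \<in> T \<Longrightarrow> X \<in> prods T 1"
  unfolding prods_def
  by (rule CollectI, rule exI[of _ "[X]"]) auto



lemma hard_dir:
  fixes E :: "'n::finite \<Rightarrow> 'n \<Rightarrow> bool"
  assumes sg: "simple_graph E" and ck: "ck_connected k E" and sep: "separator (SG E) P"
  shows "k \<le> rank P"
proof (rule ccontr)
  assume "\<not> k \<le> rank P"
  then have rkP: "rank P < k" by simp
  have PP: "P ** P = P" and Padj: "adj P = P" using sep unfolding separator_def projection_def by auto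
  define Q where "Q = mat 1 - P"
  have PQ: "P = mat 1 - Q" unfolding Q_def by simp
  have QQ: "Q ** Q = Q" unfolding Q_def
    by (simp add: matrix_sub_ldistrib' matrix_sub_rdistrib' PP)
  have QQ': "X ** Q ** Q = X ** Q" for X by (metis matrix_mul_assoc QQ)
  have Qadj: "Q $ a $ b = cnj (Q $ b $ a)" for a b
  proof -
    have "P $ a $ b = cnj (P $ b $ a)" using arg_cong[OF Padj, of "\<lambda>A. A $ a $ b"] by simp
    then show ?thesis unfolding Q_def by (simp add: mat_def)
  qed
  define Z where "Z = {j. Q $ j $ j = 0}"
  have Zcol: "Q $ a $ j = 0" if "j \<in> Z" for a j
  proof -
    have "(Q ** Q) $ j $ j = (\<Sum>a\<in>UNIV. cnj (Q $ a $ j) * Q $ a $ j)"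
      unfolding matrix_matrix_mult_def by (simp add: Qadj[of j])
    then have "(\<Sum>a\<in>UNIV. cnj (Q $ a $ j) * Q $ a $ j) = 0" using that unfolding Z_def QQ by simp
    then show ?thesis using sum_cnj_sq_zero[of UNIV "\<lambda>a. Q $ a $ j" a] by simp
  qed
  have Zrow: "Q $ j $ a = 0" if "j \<in> Z" for a j
    using Zcol[OF that, of a] Qadj[of j a] by simp
  have cardZ: "card Z \<le> rank P"
  proof -
    let ?B = "(\<lambda>i. axis i (1::complex)) ` Z"
    have "?B \<subseteq> rows P"
    proof
      fix x assume "x \<in> ?B"
      then obtain j where j: "j \<in> Z" "x = axis j 1" by blast
      have "row j P = axis j 1" unfolding PQ
        by (auto simp: row_def vec_eq_iff axis_def mat_def Zrow[OF j(1)])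
      then show "x \<in> rows P" unfolding rows_def using j by (metis (mono_tags, lifting) UNIV_I mem_Collect_eq)
    qed
    moreover have ind: "vec.independent ?B"
      by (rule vec.independent_mono[OF independent_cart_basis]) (auto simp: cart_basis_def)
    ultimately have "card ?B \<le> vec.dim (rows P)" by (rule vec.independent_card_le_dim)
    moreover have "card ?B = card Z"
      by (rule card_image) (auto simp: inj_on_def axis_eq_axis)
    ultimately show ?thesis unfolding row_rank_def_gen by simp
  qed
  have kn: "k \<le> CARD('n) - 1"
  proof -
    obtain w :: 'n where True by blast
    have "UNIV - (UNIV - {w}) = {w}" by blast
    then have "classical_separator E (UNIV - {w})" unfolding classical_separator_def by simp
    then have "k \<le> card (UNIV - {w})" using ck unfolding ck_connected_def by blast
    then show ?thesis by (simp add: card_Diff_subset)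
  qed
  have "\<not> classical_separator E Z" using ck cardZ rkP unfolding ck_connected_def by fastforce
  then have conn: "\<not> removal_disconnected E Z" unfolding classical_separator_def by blast
  have "Z \<noteq> UNIV" using cardZ rkP kn by auto
  then obtain i0 where i0: "i0 \<notin> Z" by blast
  define M where "M i j = Q ** matunit i j ** Q" for i j
  have M_apply: "M i j $ a $ b = Q $ a $ i * Q $ j $ b" for i j a b
    unfolding M_def by (rule sandwich_matunit)
  have M_mult: "M i j ** M k' l = csmult (Q $ j $ k') (M i l)" for i j k' l
  proof -
    have "(M i j ** M k' l) $ a $ b = Q $ j $ k' * M i l $ a $ b" for a b
    proof -
      have "(M i j ** M k' l) $ a $ b = (\<Sum>c\<in>UNIV. (Q $ a $ i * Q $ l $ b) * (Q $ j $ c * Q $ c $ k'))"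
        unfolding matrix_matrix_mult_def by (simp add: M_apply mult_ac)
      also have "\<dots> = (Q $ a $ i * Q $ l $ b) * (Q ** Q) $ j $ k'"
        unfolding matrix_matrix_mult_def by (simp add: sum_distrib_left)
      finally show ?thesis unfolding QQ M_apply by (simp add: mult_ac)
    qed
    then show ?thesis by (simp add: vec_eq_iff)
  qed
  define T where "T = compress P (SG E)"
  have T_eq: "T = (\<lambda>A. Q ** A ** Q) ` SG E" unfolding T_def compress_def Q_def ..
  have MT: "i = j \<or> E i j \<Longrightarrow> M i j \<in> T" for i j
    unfolding T_eq M_def using matunit_SG by blast
  define R where "R = (\<lambda>a b. a \<notin> Z \<and> b \<notin> Z \<and> E a b)"
  have walk: "\<forall>i. i \<notin> Z \<longrightarrow> (\<exists>l\<le>m. (R ^^ l) i j) \<longrightarrow>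
      (\<exists>c. c \<noteq> 0 \<and> csmult c (M i j) \<in> prods T (Suc m))" if j: "j \<notin> Z" for m j
  proof (induction m)
    case 0
    show ?case
    proof (intro allI impI)
      fix i assume "i \<notin> Z" "\<exists>l\<le>0. (R ^^ l) i j"
      then have "i = j" by auto
      then show "\<exists>c. c \<noteq> 0 \<and> csmult c (M i j) \<in> prods T (Suc 0)"
        using prods_one[OF MT[of i j]] by (intro exI[of _ 1]) auto
    qed
  next
    case (Suc m)
    show ?case
    proof (intro allI impI)
      fix i assume i: "i \<notin> Z" and "\<exists>l\<le>Suc m. (R ^^ l) i j"
      then obtain l where l: "l \<le> Suc m" "(R ^^ l) i j" by blast
      show "\<exists>c. c \<noteq> 0 \<and> csmult c (M i j) \<in> prods T (Suc (Suc m))"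
      proof (cases "l \<le> m")
        case True
        then obtain c where c: "c \<noteq> 0" "csmult c (M i j) \<in> prods T (Suc m)"
          using Suc.IH i l by blast
        have "M i i ** csmult c (M i j) \<in> prods T (Suc (Suc m))"
          by (rule prods_cons[OF c(2) MT]) simp
        moreover have "M i i ** csmult c (M i j) = csmult (c * Q $ i $ i) (M i j)"
          by (simp add: csmult_mult_right M_mult mult.commute)
        moreover have "c * Q $ i $ i \<noteq> 0" using c(1) i unfolding Z_def by simp
        ultimately show ?thesis by metis
      next
        case False
        then have "l = Suc m" using l by simp
        then obtain i' where i': "R i i'" "(R ^^ m) i' j" using l(2) by (metis relpowp_Suc_E2)
        then have i'Z: "i' \<notin> Z" and Eii': "E i i'" unfolding R_def by auto
        obtain c where c: "c \<noteq> 0" "csmult c (M i' j) \<in> prods T (Suc m)"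
          using Suc.IH i'Z i'(2) by blast
        have "M i i' ** csmult c (M i' j) \<in> prods T (Suc (Suc m))"
          by (rule prods_cons[OF c(2) MT]) (simp add: Eii')
        moreover have "M i i' ** csmult c (M i' j) = csmult (c * Q $ i' $ i') (M i j)"
          by (simp add: csmult_mult_right M_mult mult.commute)
        moreover have "c * Q $ i' $ i' \<noteq> 0" using c(1) i'Z unfolding Z_def by simp
        ultimately show ?thesis by metis
      qed
    qed
  qed
  have "\<forall>u v. \<exists>l. u \<notin> Z \<longrightarrow> v \<notin> Z \<longrightarrow> (R ^^ l) u v"
    using conn unfolding removal_disconnected_def R_def rtranclp_power by blast
  then obtain f where f: "\<And>u v. u \<notin> Z \<Longrightarrow> v \<notin> Z \<Longrightarrow> (R ^^ f u v) u v" by metis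
  define N where "N = Max (range (case_prod f))"
  have fN: "f u v \<le> N" for u v unfolding N_def
    by (rule Max_ge) (auto intro: finite_imageI)
  have Mq: "M i j \<in> qpow T (Suc N)" for i j
  proof (cases "i \<notin> Z \<and> j \<notin> Z")
    case True
    then obtain c where c: "c \<noteq> 0" "csmult c (M i j) \<in> prods T (Suc N)"
      using walk[of j N] f[of i j] fN[of i j] by blast
    have "csmult (1/c) (csmult c (M i j)) \<in> qpow T (Suc N)"
      unfolding qpow_def by (rule cspan_inc[OF c(2)])
    then show ?thesis using c(1) by simp
  next
    case False
    then have "M i j = 0" by (auto simp: vec_eq_iff M_apply Zcol Zrow)
    then show ?thesis using csubspace_cspan[of "prods T (Suc N)"] unfolding qpow_def csubspace_def by simp
  qed
  have corner_eq: "corner P = (\<lambda>A. Q ** A ** Q) ` UNIV" unfolding corner_def compress_def Q_def ..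
  have corner_sub: "csubspace (corner P)"
    unfolding csubspace_def corner_eq
  proof (intro conjI ballI allI)
    show "0 \<in> range (\<lambda>A. Q ** A ** Q)" by (rule image_eqI[of _ _ 0]) auto
  next
    fix A B assume "A \<in> range (\<lambda>A. Q ** A ** Q)" "B \<in> range (\<lambda>A. Q ** A ** Q)"
    then obtain A' B' where "A = Q ** A' ** Q" "B = Q ** B' ** Q" by blast
    then have "A + B = Q ** (A' + B') ** Q" by (simp add: matrix_add_ldistrib matrix_add_rdistrib')
    then show "A + B \<in> range (\<lambda>A. Q ** A ** Q)" by blast
  next
    fix c A assume "A \<in> range (\<lambda>A. Q ** A ** Q)"
    then obtain A' where "A = Q ** A' ** Q" by blast
    then have "csmult c A = Q ** csmult c A' ** Q" by (simp add: csmult_mult_left csmult_mult_right)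
    then show "csmult c A \<in> range (\<lambda>A. Q ** A ** Q)" by blast
  qed
  have T_corner: "T \<subseteq> corner P" unfolding T_eq corner_eq by blast
  have foldr_corner: "As \<noteq> [] \<Longrightarrow> set As \<subseteq> corner P \<Longrightarrow> foldr (**) As (mat 1) \<in> corner P" for As
  proof (induction As)
    case Nil then show ?case by simp
  next
    case (Cons X As)
    show ?case
    proof (cases "As = []")
      case True then show ?thesis using Cons by simp
    next
      case False
      then have Y: "foldr (**) As (mat 1) \<in> corner P" using Cons by simp
      obtain A where A: "X = Q ** A ** Q" using Cons(3) unfolding corner_eq by auto
      obtain B where B: "foldr (**) As (mat 1) = Q ** B ** Q" using Y unfolding corner_eq by auto
      have "X ** foldr (**) As (mat 1) = Q ** (A ** Q ** B) ** Q"
        unfolding A B by (simp add: matrix_mul_assoc QQ')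
      then show ?thesis unfolding corner_eq by simp
    qed
  qed
  have "qpow T (Suc N) \<subseteq> corner P"
    unfolding qpow_def
  proof (rule cspan_sub[OF corner_sub])
    show "prods T (Suc N) \<subseteq> corner P"
      unfolding prods_def using T_corner
      by (auto intro!: foldr_corner)
  qed
  moreover have "corner P \<subseteq> qpow T (Suc N)"
  proof
    fix Y assume "Y \<in> corner P"
    then obtain A where A: "Y = Q ** A ** Q" unfolding corner_eq by blast
    have "Y = (\<Sum>i\<in>UNIV. \<Sum>j\<in>UNIV. csmult (A $ i $ j) (M i j))"
    proof -
      have "Y $ a $ b = (\<Sum>i\<in>UNIV. \<Sum>j\<in>UNIV. A $ i $ j * (Q $ a $ i * Q $ j $ b))" for a b
      proof -
        have "Y $ a $ b = (\<Sum>j\<in>UNIV. \<Sum>i\<in>UNIV. A $ i $ j * (Q $ a $ i * Q $ j $ b))"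
          unfolding A matrix_matrix_mult_def by (simp add: sum_distrib_right sum_distrib_left mult_ac)
        also have "\<dots> = (\<Sum>i\<in>UNIV. \<Sum>j\<in>UNIV. A $ i $ j * (Q $ a $ i * Q $ j $ b))"
          by (rule sum.swap)
        finally show ?thesis .
      qed
      then show ?thesis by (simp add: vec_eq_iff M_apply)
    qed
    also have "\<dots> \<in> qpow T (Suc N)"
      using csubspace_cspan[of "prods T (Suc N)"] Mq unfolding qpow_def
      by (intro csubspace_sum) (auto simp: csubspace_def)
    finally show "Y \<in> qpow T (Suc N)" .
  qed
  ultimately have "compressed_connected P (SG E)"
    unfolding compressed_connected_def T_def by (intro exI[of _ "Suc N"]) auto
  then have "one_dimensional T" using sep unfolding separator_def T_def by blast
  then obtain B where B: "B \<noteq> 0" "T = range (\<lambda>c. csmult c B)"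
    unfolding one_dimensional_def cspan_single by blast
  define w where "w = row i0 Q"
  have rowQ: "row j Q \<in> vec.span {w}" for j
  proof (cases "j \<in> Z")
    case True
    then have "row j Q = 0" by (simp add: row_def vec_eq_iff Zrow)
    then show ?thesis by (simp add: vec.span_zero)
  next
    case False
    obtain a where a: "M j j = csmult a B" using MT[of j j] B(2) by auto
    obtain b where b: "M i0 i0 = csmult b B" using MT[of i0 i0] B(2) by auto
    have "M i0 i0 $ i0 $ i0 \<noteq> 0" using i0 unfolding M_apply Z_def by simp
    then have b0: "b \<noteq> 0" using b by auto
    have Mjj: "M j j = csmult (a / b) (M i0 i0)" using b0 unfolding a b by (simp add: vec_eq_iff)
    define cc where "cc = ((a / b) * Q $ j $ i0 / Q $ j $ j)"
    have qj: "Q $ j $ x = cc * Q $ i0 $ x" for x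
    proof -
      have h: "Q $ j $ j * Q $ j $ x = (a / b) * (Q $ j $ i0 * Q $ i0 $ x)"
        using arg_cong[OF Mjj, of "\<lambda>A. A $ j $ x"] by (simp add: M_apply)
      have nz: "Q $ j $ j \<noteq> 0" using False unfolding Z_def by simp
      have e: "Q $ j $ x = (Q $ j $ j * Q $ j $ x) / Q $ j $ j" using nz by simp
      from e[unfolded h] have "Q $ j $ x = ((a / b) * (Q $ j $ i0 * Q $ i0 $ x)) / Q $ j $ j" .
      then show ?thesis unfolding cc_def by simp
    qed
    have "row j Q = cc *s w"
    proof (rule vec_eq_iff[THEN iffD2], rule allI)
      fix x
      have "row j Q $ x = Q $ j $ x" by (simp add: row_def)
      also have "\<dots> = cc * Q $ i0 $ x" by (rule qj)
      also have "\<dots> = (cc *s w) $ x" by (simp add: w_def row_def)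
      finally show "row j Q $ x = (cc *s w) $ x" .
    qed
    then show ?thesis by (simp add: vec.span_scale vec.span_base)
  qed
  have "cart_basis \<subseteq> vec.span (insert w (rows P))"
  proof
    fix x :: "complex ^ 'n" assume "x \<in> cart_basis"
    then obtain j where x: "x = axis j 1" unfolding cart_basis_def by blast
    have "x = row j P + row j Q" unfolding x PQ by (simp add: row_def vec_eq_iff axis_def mat_def)
    moreover have "row j P \<in> vec.span (insert w (rows P))"
      by (rule vec.span_base) (auto simp: rows_def)
    moreover have "row j Q \<in> vec.span (insert w (rows P))"
      using rowQ[of j] vec.span_mono[of "{w}" "insert w (rows P)"] by auto
    ultimately show "x \<in> vec.span (insert w (rows P))" by (simp add: vec.span_add)
  qed
  then have "vec.dim (cart_basis :: (complex ^ 'n) set) \<le> vec.dim (insert w (rows P))"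
    by (rule vec.dim_mono)
  also have "\<dots> \<le> vec.dim (rows P) + 1" by (simp add: vec.dim_insert)
  finally have "CARD('n) \<le> rank P + 1"
    unfolding row_rank_def_gen vec.dim_eq_card_independent[OF independent_cart_basis] card_cart_basis .
  then show False using rkP kn by linarith
qed


theorem proposition4p4:
  fixes E :: "'n::finite \<Rightarrow> 'n \<Rightarrow> bool" and k :: nat
  assumes "simple_graph E"
  shows "ck_connected k E \<longleftrightarrow> qk_connected k (SG E)"
proof
  assume "ck_connected k E"
  then show "qk_connected k (SG E)"
    unfolding qk_connected_def using hard_dir[OF assms] by blast
next
  assume "qk_connected k (SG E)"
  then show "ck_connected k E"
    unfolding ck_connected_def using easy_dir[OF assms] by blast
qed

end
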